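(* Let $K\ge2$ and $\theta=K$. Let $(P_1^K,\dots,P_K^K)$ be the descending order statistics of a random vector uniformly distributed on the simplex $\{(x_1,\dots,x_K): x_i\ge0,\ \sum_{i=1}^K x_i=1\}$ (i.e. a symmetric $\mathrm{Dirichlet}(\frac\theta K,\dots,\frac\theta K)=\mathrm{Dirichlet}(1,\dots,1)$ vector). Fix $r\ge1$. Then, as $\theta=K\to\infty$, the family of laws of $(P_1^K,\dots,P_r^K)$ satisfies an LDP on $$\nabla_r=\Big\{(q_1,\dots,q_r):0\le q_r\le\dots\le q_1,\ \sum_{i=1}^r q_i\le1\Big\}$$ with speed $\theta$ and rate function $$S_r(p_1,\dots,p_r)=\begin{cases}\log\dfrac{1}{1-\sum_{k=1}^r p_k},&\sum_{k=1}^r p_k<1,\\ \infty,&\text{otherwise.}\end{cases}$$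
   Context: An LDP with speed $\theta$ means the bounds $\limsup\theta^{-1}\log P(F)\le-\inf_F S_r$ for closed $F$ and $\liminf\theta^{-1}\log P(G)\ge-\inf_G S_r$ for open $G$, as $\theta\to\infty$. *)

theory Defs
  imports "HOL-Probability.Probability"
begin

text \<open>Points of R^K are represented as functions nat => real (coordinates 0..K-1).
  The simplex projected onto its first K-1 coordinates.\<close>
definition proj_simplex :: "nat \<Rightarrow> (nat \<Rightarrow> real) set" where
  "proj_simplex K = {x \<in> space (PiM {..<K-1} (\<lambda>_. lborel)).
      (\<forall>i<K-1. 0 \<le> x i) \<and> (\<Sum>i<K-1. x i) \<le> 1}"

text \<open>Uniform distribution on the simplex {x : x_i >= 0, sum x_i = 1} in R^K:
  uniform measure on the projected simplex, lifted by setting the last coordinate.\<close>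
definition unif_simplex :: "nat \<Rightarrow> (nat \<Rightarrow> real) measure" where
  "unif_simplex K = distr (uniform_measure (PiM {..<K-1} (\<lambda>_. lborel)) (proj_simplex K))
      (PiM {..<K} (\<lambda>_. lborel)) (\<lambda>x. x(K-1 := 1 - (\<Sum>i<K-1. x i)))"

text \<open>The r largest coordinates in descending order (P_1,...,P_r), stored at
  indices 0..r-1; all other coordinates are 0.\<close>
definition top_stats :: "nat \<Rightarrow> nat \<Rightarrow> (nat \<Rightarrow> real) \<Rightarrow> (nat \<Rightarrow> real)" where
  "top_stats r K x = (\<lambda>i. if i < r then rev (sort (map x [0..<K])) ! i else 0)"

definition law_top :: "nat \<Rightarrow> nat \<Rightarrow> (nat \<Rightarrow> real) measure" where
  "law_top r K = distr (unif_simplex K) borel (top_stats r K)"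

definition nabla :: "nat \<Rightarrow> (nat \<Rightarrow> real) set" where
  "nabla r = {q. (\<forall>i\<ge>r. q i = 0) \<and> 0 \<le> q (r-1) \<and> (\<forall>i. Suc i < r \<longrightarrow> q (Suc i) \<le> q i)
                 \<and> (\<Sum>i<r. q i) \<le> 1}"

definition rate :: "nat \<Rightarrow> (nat \<Rightarrow> real) \<Rightarrow> ereal" where
  "rate r p = (if (\<Sum>k<r. p k) < 1 then ereal (ln (1 / (1 - (\<Sum>k<r. p k)))) else \<infinity>)"

definition elog :: "real \<Rightarrow> ereal" where
  "elog x = (if 0 < x then ereal (ln x) else -\<infinity>)"

definition LDP :: "'a::topological_space set \<Rightarrow> (nat \<Rightarrow> 'a measure) \<Rightarrow> (nat \<Rightarrow> real)
                   \<Rightarrow> ('a \<Rightarrow> ereal) \<Rightarrow> bool" where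
  "LDP X \<mu> \<theta> S \<longleftrightarrow>
     (\<forall>F. closedin (top_of_set X) F \<longrightarrow>
         limsup (\<lambda>n. ereal (1 / \<theta> n) * elog (measure (\<mu> n) F)) \<le> - (INF x\<in>F. S x)) \<and>
     (\<forall>G. openin (top_of_set X) G \<longrightarrow>
         liminf (\<lambda>n. ereal (1 / \<theta> n) * elog (measure (\<mu> n) G)) \<ge> - (INF x\<in>G. S x))"

end

theory Submission imports Defs "HOL-Combinatorics.Permutations" "HOL-Real_Asymp.Real_Asymp" begin

lemma rev_sort_le_iff:
  fixes xs :: "real list"
  assumes k: "k < length xs"
  shows "rev (sort xs) ! k \<le> t \<longleftrightarrow> length (filter (\<lambda>y. t < y) xs) \<le> k"
proof -
  define ys where "ys = sort xs"
  define n where "n = length xs"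
  have len: "length ys = n" by (simp add: ys_def n_def)
  have srt: "sorted ys" by (simp add: ys_def)
  have "length (filter (\<lambda>y. t < y) xs) = length (filter (\<lambda>y. t < y) ys)"
  proof -
    have "mset (filter (\<lambda>y. t < y) xs) = mset (filter (\<lambda>y. t < y) ys)"
      by (simp add: ys_def)
    then show ?thesis by (metis mset_eq_length)
  qed
  also have "\<dots> = card {i. i < n \<and> t < ys ! i}"
    by (simp add: length_filter_conv_card len)
  finally have eq: "length (filter (\<lambda>y. t < y) xs) = card {i. i < n \<and> t < ys ! i}" .
  have r: "rev (sort xs) ! k = ys ! (n - 1 - k)"
    using k by (simp add: rev_nth ys_def n_def)
  show ?thesis
  proof
    assume a: "rev (sort xs) ! k \<le> t"
    have "{i. i < n \<and> t < ys ! i} \<subseteq> {n-k..<n}"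
    proof
      fix i assume i: "i \<in> {i. i < n \<and> t < ys ! i}"
      have "\<not> i \<le> n - 1 - k"
      proof
        assume "i \<le> n - 1 - k"
        then have "ys ! i \<le> ys ! (n-1-k)" using srt k len by (intro sorted_nth_mono) (auto simp: n_def)
        then show False using a r i by auto
      qed
      then show "i \<in> {n-k..<n}" using i k by (auto simp: n_def)
    qed
    then have "card {i. i < n \<and> t < ys ! i} \<le> card {n-k..<n}" by (intro card_mono) auto
    then show "length (filter (\<lambda>y. t < y) xs) \<le> k" using eq k by (simp add: n_def)
  next
    assume a: "length (filter (\<lambda>y. t < y) xs) \<le> k"
    show "rev (sort xs) ! k \<le> t"
    proof (rule ccontr)
      assume "\<not> rev (sort xs) ! k \<le> t"
      then have b: "t < ys ! (n-1-k)" using r by auto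
      have "{n-1-k..<n} \<subseteq> {i. i < n \<and> t < ys ! i}"
      proof
        fix i assume i: "i \<in> {n-1-k..<n}"
        then have "ys ! (n-1-k) \<le> ys ! i" using srt len by (intro sorted_nth_mono) auto
        then show "i \<in> {i. i < n \<and> t < ys ! i}" using b i by auto
      qed
      then have "card {n-1-k..<n} \<le> card {i. i < n \<and> t < ys ! i}" by (intro card_mono) auto
      then show False using a eq k by (simp add: n_def)
    qed
  qed
qed

lemma rev_sort_lipschitz:
  fixes us vs :: "real list"
  assumes len: "length us = length vs" and k: "k < length vs"
    and d: "\<And>i. i < length vs \<Longrightarrow> \<bar>us ! i - vs ! i\<bar> \<le> e"
  shows "rev (sort us) ! k \<le> rev (sort vs) ! k + e"
proof -
  define t where "t = rev (sort vs) ! k"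
  have "length (filter (\<lambda>y. t < y) vs) \<le> k" using rev_sort_le_iff[OF k, of t] by (simp add: t_def)
  moreover have "length (filter (\<lambda>y. t + e < y) us) \<le> length (filter (\<lambda>y. t < y) vs)"
  proof -
    have "length (filter (\<lambda>y. t + e < y) us) = card {i. i < length vs \<and> t + e < us ! i}"
      by (simp add: length_filter_conv_card len)
    also have "\<dots> \<le> card {i. i < length vs \<and> t < vs ! i}"
      apply (rule card_mono) apply simp
      using d by fastforce
    also have "\<dots> = length (filter (\<lambda>y. t < y) vs)"
      by (simp add: length_filter_conv_card)
    finally show ?thesis .
  qed
  ultimately show ?thesis using rev_sort_le_iff[of k us "t + e"] k len by (simp add: t_def)
qed

lemma lborel_affine_pre:
  fixes t a :: real
  assumes t: "t > 0" and A: "A \<in> sets borel"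
  shows "emeasure lborel {x. (x - a) / t \<in> A} = ennreal t * emeasure lborel A"
proof -
  have B: "{x. (x - a) / t \<in> A} \<in> sets borel"
  proof -
    have "(\<lambda>x::real. (x - a) / t) \<in> borel_measurable borel" by measurable
    then have "(\<lambda>x::real. (x - a) / t) -` A \<inter> space borel \<in> sets borel" using A by (rule measurable_sets)
    then show ?thesis by (simp add: vimage_def)
  qed
  have "emeasure lborel {x. (x - a) / t \<in> A} =
      emeasure (density (distr lborel borel (\<lambda>x. a + t * x)) (\<lambda>_. ennreal \<bar>t\<bar>)) {x. (x - a) / t \<in> A}"
    using lborel_real_affine[of t a] t by simp
  also have "\<dots> = ennreal t * emeasure (distr lborel borel (\<lambda>x. a + t * x)) {x. (x - a) / t \<in> A}"
    using B t by (subst emeasure_density_const) auto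
  also have "\<dots> = ennreal t * emeasure lborel ((\<lambda>x. a + t * x) -` {x. (x - a) / t \<in> A} \<inter> space lborel)"
    using B by (subst emeasure_distr) auto
  also have "(\<lambda>x. a + t * x) -` {x. (x - a) / t \<in> A} \<inter> space lborel = A"
    using t by auto
  finally show ?thesis .
qed

lemma PiM_scale:
  fixes a :: "nat \<Rightarrow> real" and t :: real
  assumes t: "t > 0" and I: "finite I" and S: "S \<in> sets (PiM I (\<lambda>_. lborel))"
  shows "emeasure (PiM I (\<lambda>_. lborel)) {z \<in> space (PiM I (\<lambda>_. lborel)). (\<lambda>k\<in>I. (z k - a k) / t) \<in> S}
         = ennreal (t ^ card I) * emeasure (PiM I (\<lambda>_. lborel)) S"
proof -
  define M where "M = PiM I (\<lambda>_. lborel::real measure)"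
  define g where "g = (\<lambda>z::nat\<Rightarrow>real. \<lambda>k\<in>I. (z k - a k) / t)"
  have g: "g \<in> measurable M M" unfolding g_def M_def by measurable
  define D where "D = distr M M g"
  define c where "c = ennreal (1 / t ^ card I)"
  interpret product_sigma_finite "\<lambda>_::nat. lborel::real measure" by standard
  have eq: "density D (\<lambda>_. c) = M"
    unfolding M_def
  proof (rule PiM_eqI[OF I])
    show "sets (density D (\<lambda>_. c)) = sets (PiM I (\<lambda>_. lborel))" by (simp add: D_def M_def)
  next
    fix A :: "nat \<Rightarrow> real set" assume A: "\<And>i. i \<in> I \<Longrightarrow> A i \<in> sets lborel"
    have box: "Pi\<^sub>E I A \<in> sets M" unfolding M_def using A I by (intro sets_PiM_I_finite) auto
    have pre: "g -` Pi\<^sub>E I A \<inter> space M = Pi\<^sub>E I (\<lambda>i. {x. (x - a i) / t \<in> A i})"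
      unfolding g_def M_def by (auto simp: space_PiM PiE_def Pi_def extensional_def)
    have "emeasure (density D (\<lambda>_. c)) (Pi\<^sub>E I A) = c * emeasure D (Pi\<^sub>E I A)"
      using box by (subst emeasure_density_const) (auto simp: D_def)
    also have "emeasure D (Pi\<^sub>E I A) = emeasure M (Pi\<^sub>E I (\<lambda>i. {x. (x - a i) / t \<in> A i}))"
      unfolding D_def using box g by (subst emeasure_distr) (auto simp: pre)
    also have "\<dots> = (\<Prod>i\<in>I. emeasure lborel {x. (x - a i) / t \<in> A i})"
    proof -
      have "\<And>i. i \<in> I \<Longrightarrow> {x. (x - a i) / t \<in> A i} \<in> sets lborel"
      proof -
        fix i assume "i \<in> I"
        have h: "(\<lambda>x::real. (x - a i) / t) \<in> borel_measurable borel" by measurable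
        have "(\<lambda>x::real. (x - a i) / t) -` A i \<inter> space borel \<in> sets borel"
          using measurable_sets[OF h, of "A i"] A \<open>i \<in> I\<close> by auto
        then show "{x. (x - a i) / t \<in> A i} \<in> sets lborel" by (simp add: vimage_def)
      qed
      then show ?thesis unfolding M_def using I by (subst emeasure_PiM) auto
    qed
    also have "\<dots> = (\<Prod>i\<in>I. ennreal t * emeasure lborel (A i))"
      using A t by (intro prod.cong refl lborel_affine_pre) auto
    also have "\<dots> = ennreal (t ^ card I) * (\<Prod>i\<in>I. emeasure lborel (A i))"
      using t by (simp add: prod.distrib ennreal_power)
    finally have "emeasure (density D (\<lambda>_. c)) (Pi\<^sub>E I A) =
        (c * ennreal (t ^ card I)) * (\<Prod>i\<in>I. emeasure lborel (A i))"
      by (simp add: mult.assoc)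
    also have "c * ennreal (t ^ card I) = 1"
      unfolding c_def using t by (simp add: ennreal_mult''[symmetric])
    finally show "emeasure (density D (\<lambda>_. c)) (Pi\<^sub>E I A) = (\<Prod>i\<in>I. emeasure lborel (A i))" by simp
  qed
  have SM: "S \<in> sets M" using S by (simp add: M_def)
  have "emeasure M S = c * emeasure D S"
    using SM by (subst eq[symmetric], subst emeasure_density_const) (auto simp: D_def)
  then have "ennreal (t ^ card I) * emeasure M S = (ennreal (t ^ card I) * c) * emeasure D S"
    by (simp add: mult.assoc)
  also have "ennreal (t ^ card I) * c = 1"
    unfolding c_def using t by (simp add: ennreal_mult''[symmetric])
  finally have "emeasure D S = ennreal (t ^ card I) * emeasure M S" by simp
  moreover have "emeasure D S = emeasure M {z \<in> space M. g z \<in> S}"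
    unfolding D_def using SM g by (subst emeasure_distr) (auto simp: vimage_def Int_def conj_commute)
  ultimately show ?thesis by (simp add: M_def g_def)
qed

abbreviation LB :: "nat \<Rightarrow> (nat \<Rightarrow> real) measure" where
  "LB n \<equiv> PiM {..<n} (\<lambda>_. lborel)"

definition lift :: "nat \<Rightarrow> (nat \<Rightarrow> real) \<Rightarrow> (nat \<Rightarrow> real)" where
  "lift K = (\<lambda>x. x(K-1 := 1 - (\<Sum>i<K-1. x i)))"

lemma unif_simplex_alt: "unif_simplex K = distr (uniform_measure (LB (K-1)) (proj_simplex K)) (LB K) (lift K)"
  by (simp add: unif_simplex_def lift_def)

lemma proj_simplex_sets: "proj_simplex K \<in> sets (LB (K-1))"
  unfolding proj_simplex_def by measurable

lemma space_LB: "space (LB n) = PiE {..<n} (\<lambda>_. UNIV)"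
  by (simp add: space_PiM)

lemma lift_comp_measurable:
  assumes i: "i < K"
  shows "(\<lambda>\<omega>. lift K \<omega> i) \<in> measurable (LB (K-1)) lborel"
proof (cases "i = K - 1")
  case True
  then have e: "(\<lambda>\<omega>. lift K \<omega> i) = (\<lambda>\<omega>. 1 - (\<Sum>j<K-1. \<omega> j))" by (auto simp: lift_def)
  show ?thesis unfolding e measurable_lborel2 by measurable
next
  case False
  then have i': "i \<in> {..<K-1}" using i by auto
  have e: "(\<lambda>\<omega>. lift K \<omega> i) = (\<lambda>\<omega>. \<omega> i)" using False by (auto simp: lift_def)
  show ?thesis unfolding e
    using measurable_component_singleton[OF i', of "\<lambda>_. lborel"] by simp
qed

lemma lift_measurable:
  assumes K: "K \<ge> 1"
  shows "lift K \<in> measurable (LB (K-1)) (LB K)"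
proof -
  have "(\<lambda>\<omega> i. lift K \<omega> i) \<in> measurable (LB (K-1)) (LB K)"
    apply (rule measurable_PiM_single')
    using lift_comp_measurable apply simp
    using K by (auto simp: space_LB lift_def PiE_def extensional_def)
  then show ?thesis by simp
qed

lemma proj_simplex_finite: "emeasure (LB (K-1)) (proj_simplex K) \<noteq> \<infinity>"
proof -
  interpret product_sigma_finite "\<lambda>_::nat. lborel::real measure" by standard
  have "proj_simplex K \<subseteq> PiE {..<K-1} (\<lambda>_. {0..1})"
  proof
    fix x assume x: "x \<in> proj_simplex K"
    then have "\<forall>i<K-1. 0 \<le> x i" "(\<Sum>i<K-1. x i) \<le> 1" "x \<in> space (LB (K-1))"
      by (auto simp: proj_simplex_def)
    moreover have "\<And>i. i < K - 1 \<Longrightarrow> x i \<le> 1"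
    proof -
      fix i assume i: "i < K - 1"
      have "x i \<le> (\<Sum>j<K-1. x j)"
        using i \<open>\<forall>i<K-1. 0 \<le> x i\<close> by (intro member_le_sum) auto
      then show "x i \<le> 1" using \<open>(\<Sum>i<K-1. x i) \<le> 1\<close> by linarith
    qed
    ultimately show "x \<in> PiE {..<K-1} (\<lambda>_. {0..1})" by (auto simp: space_LB PiE_def)
  qed
  then have "emeasure (LB (K-1)) (proj_simplex K) \<le> emeasure (LB (K-1)) (PiE {..<K-1} (\<lambda>_. {0..1}))"
    by (intro emeasure_mono) auto
  also have "\<dots> = 1" by (subst emeasure_PiM) auto
  finally show ?thesis by (auto simp: top_unique)
qed

lemma proj_simplex_pos: "emeasure (LB (K-1)) (proj_simplex K) \<noteq> 0"
proof -
  interpret product_sigma_finite "\<lambda>_::nat. lborel::real measure" by standard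
  define c where "c = 1 / real (max 1 (K-1))"
  have c: "c > 0" by (simp add: c_def)
  have "PiE {..<K-1} (\<lambda>_. {0..c}) \<subseteq> proj_simplex K"
  proof
    fix x assume x: "x \<in> PiE {..<K-1} (\<lambda>_. {0..c})"
    have xi: "\<And>i. i \<in> {..<K-1} \<Longrightarrow> x i \<in> {0..c}" using PiE_mem[OF x] by blast
    have "(\<Sum>i<K-1. x i) \<le> (\<Sum>i<K-1. c)" using xi by (intro sum_mono) auto
    also have "\<dots> = real (K-1) * c" by simp
    also have "\<dots> \<le> 1" unfolding c_def by (simp add: field_simps)
    finally show "x \<in> proj_simplex K" using x by (auto simp: proj_simplex_def space_LB PiE_def)
  qed
  then have le: "emeasure (LB (K-1)) (PiE {..<K-1} (\<lambda>_. {0..c})) \<le> emeasure (LB (K-1)) (proj_simplex K)"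
    by (intro emeasure_mono proj_simplex_sets)
  have eq1: "emeasure (LB (K-1)) (PiE {..<K-1} (\<lambda>_. {0..c})) = (\<Prod>i<K-1. ennreal c)"
    using c by (subst emeasure_PiM) auto
  have eq2: "(\<Prod>i<K-1. ennreal c) = ennreal (c ^ (K-1))" using c by (simp add: ennreal_power)
  have pos: "ennreal (c ^ (K-1)) > 0" using c by simp
  have "0 < emeasure (LB (K-1)) (PiE {..<K-1} (\<lambda>_. {0..c}))" using pos eq1 eq2 by simp
  then have "0 < emeasure (LB (K-1)) (proj_simplex K)" using le by (rule less_le_trans)
  then show ?thesis by simp
qed

lemma prob_unif: "K \<ge> 1 \<Longrightarrow> prob_space (unif_simplex K)"
  unfolding unif_simplex_alt
  by (intro prob_space.prob_space_distr prob_space_uniform_measure proj_simplex_finite proj_simplex_pos)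
     (subst measurable_cong_sets[OF sets_uniform_measure refl], rule lift_measurable)

lemma measure_unif:
  assumes K: "K \<ge> 1" and E: "E \<in> sets (LB K)"
  shows "measure (unif_simplex K) E =
    measure (LB (K-1)) (proj_simplex K \<inter> (lift K -` E \<inter> space (LB (K-1)))) / measure (LB (K-1)) (proj_simplex K)"
proof -
  have pre: "lift K -` E \<inter> space (LB (K-1)) \<in> sets (LB (K-1))"
    using measurable_sets[OF lift_measurable[OF K] E] .
  have "measure (unif_simplex K) E = measure (uniform_measure (LB (K-1)) (proj_simplex K)) (lift K -` E \<inter> space (LB (K-1)))"
    unfolding unif_simplex_alt using E lift_measurable[OF K]
    by (subst measure_distr) (auto simp: measurable_cong_sets[OF sets_uniform_measure refl])
  also have "\<dots> = measure (LB (K-1)) (proj_simplex K \<inter> (lift K -` E \<inter> space (LB (K-1)))) / measure (LB (K-1)) (proj_simplex K)"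
    using pre proj_simplex_finite proj_simplex_pos by (subst measure_uniform_measure) auto
  finally show ?thesis .
qed

lemma key_formula:
  assumes K: "K \<ge> 1" and a0: "\<And>k. k < K \<Longrightarrow> 0 \<le> a k" and as: "(\<Sum>k<K. a k) < 1"
  shows "measure (unif_simplex K) {x \<in> space (LB K). \<forall>k<K. a k \<le> x k} = (1 - (\<Sum>k<K. a k)) ^ (K - 1)"
proof -
  define n where "n = K - 1"
  have Kn: "K = Suc n" using K by (simp add: n_def)
  have Kn1: "K - Suc 0 = n" "K - 1 = n" by (simp_all add: n_def)
  define t where "t = 1 - (\<Sum>k<K. a k)"
  have t: "t > 0" using as by (simp add: t_def)
  define E where "E = {x \<in> space (LB K). \<forall>k<K. a k \<le> x k}"
  have E: "E \<in> sets (LB K)" unfolding E_def by measurable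
  have sumK: "(\<Sum>k<K. f k) = (\<Sum>k<n. f k) + f n" for f :: "nat \<Rightarrow> real"
    by (simp add: Kn)
  have seteq: "proj_simplex K \<inter> (lift K -` E \<inter> space (LB (K-1))) =
      {z \<in> space (LB (K-1)). (\<lambda>k\<in>{..<K-1}. (z k - a k) / t) \<in> proj_simplex K}"
  proof (intro set_eqI iffI)
    fix z assume z: "z \<in> proj_simplex K \<inter> (lift K -` E \<inter> space (LB (K-1)))"
    then have zs: "z \<in> space (LB n)" and za: "\<forall>k<K. a k \<le> lift K z k"
      by (auto simp: E_def n_def)
    have zlt: "\<And>k. k < n \<Longrightarrow> a k \<le> z k"
    proof -
      fix k assume "k < n"
      then show "a k \<le> z k" using za[rule_format, of k] by (auto simp: lift_def Kn)
    qed
    have zn: "a n \<le> 1 - (\<Sum>i<n. z i)" using za[rule_format, of n] by (auto simp: lift_def Kn)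
    have "(\<Sum>k<n. (z k - a k) / t) = ((\<Sum>k<n. z k) - (\<Sum>k<n. a k)) / t"
      by (simp add: sum_divide_distrib[symmetric] sum_subtractf)
    also have "\<dots> \<le> 1"
      using t zn unfolding t_def sumK by (simp add: field_simps)
    finally have "(\<Sum>k<n. (z k - a k) / t) \<le> 1" .
    then show "z \<in> {z \<in> space (LB (K-1)). (\<lambda>k\<in>{..<K-1}. (z k - a k) / t) \<in> proj_simplex K}"
      using zs zlt t by (auto simp: proj_simplex_def space_LB Kn1 PiE_def extensional_def)
  next
    fix z assume z: "z \<in> {z \<in> space (LB (K-1)). (\<lambda>k\<in>{..<K-1}. (z k - a k) / t) \<in> proj_simplex K}"
    then have zs: "z \<in> space (LB n)" and
      c1: "\<forall>k<n. 0 \<le> (z k - a k) / t" and c2: "(\<Sum>k<n. (z k - a k) / t) \<le> 1"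
      by (auto simp: proj_simplex_def Kn1)
    have zlt: "\<And>k. k < n \<Longrightarrow> a k \<le> z k"
      using c1 t by (auto simp: zero_le_divide_iff)
    have "((\<Sum>k<n. z k) - (\<Sum>k<n. a k)) / t \<le> 1"
      using c2 by (simp add: sum_divide_distrib[symmetric] sum_subtractf)
    then have zn: "a n \<le> 1 - (\<Sum>i<n. z i)"
      using t unfolding t_def sumK by (simp add: field_simps)
    have an: "0 \<le> a n" using a0 Kn by auto
    have z0: "\<forall>k<n. 0 \<le> z k"
    proof (intro allI impI)
      fix k assume "k < n"
      then have "0 \<le> a k" "a k \<le> z k" using a0 zlt Kn by auto
      then show "0 \<le> z k" by linarith
    qed
    have "(\<Sum>i<n. z i) \<le> 1" using zn an by linarith
    moreover have "\<forall>k<K. a k \<le> lift K z k"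
      using zlt zn by (auto simp: lift_def Kn less_Suc_eq)
    moreover have "lift K z \<in> space (LB K)"
      using lift_measurable[OF K] zs by (auto simp: measurable_def n_def)
    ultimately show "z \<in> proj_simplex K \<inter> (lift K -` E \<inter> space (LB (K-1)))"
      using zs z0 by (auto simp: proj_simplex_def E_def n_def)
  qed
  have "emeasure (LB (K-1)) {z \<in> space (LB (K-1)). (\<lambda>k\<in>{..<K-1}. (z k - a k) / t) \<in> proj_simplex K}
      = ennreal (t ^ card {..<K-1}) * emeasure (LB (K-1)) (proj_simplex K)"
    using PiM_scale[OF t finite_lessThan proj_simplex_sets] .
  then have "measure (LB (K-1)) (proj_simplex K \<inter> (lift K -` E \<inter> space (LB (K-1))))
      = t ^ n * measure (LB (K-1)) (proj_simplex K)"
    unfolding seteq measure_def using t by (simp add: enn2real_mult n_def)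
  moreover have "measure (LB (K-1)) (proj_simplex K) \<noteq> 0"
    using proj_simplex_finite proj_simplex_pos by (simp add: measure_def enn2real_eq_0_iff)
  ultimately show ?thesis
    unfolding E_def[symmetric] measure_unif[OF K E] t_def n_def by simp
qed
definition Delta :: "nat \<Rightarrow> (nat \<Rightarrow> real) set" where
  "Delta K = {x \<in> space (LB K). (\<forall>k<K. 0 \<le> x k) \<and> (\<Sum>k<K. x k) = 1}"

lemma Delta_sets: "Delta K \<in> sets (LB K)"
  unfolding Delta_def by measurable

lemma sets_unif: "sets (unif_simplex K) = sets (LB K)"
  by (simp add: unif_simplex_alt)

lemma space_unif: "space (unif_simplex K) = space (LB K)"
  by (simp add: unif_simplex_alt)

lemma Delta_prob:
  assumes K: "K \<ge> 1"
  shows "measure (unif_simplex K) (Delta K) = 1"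
proof -
  have "proj_simplex K \<inter> (lift K -` Delta K \<inter> space (LB (K-1))) = proj_simplex K"
  proof (intro set_eqI iffI)
    fix z assume z: "z \<in> proj_simplex K"
    then have zs: "z \<in> space (LB (K-1))" and z0: "\<forall>i<K-1. 0 \<le> z i" and z1: "(\<Sum>i<K-1. z i) \<le> 1"
      by (auto simp: proj_simplex_def)
    obtain n where Kn: "K = Suc n" using K by (cases K) auto
    have "lift K z \<in> space (LB K)" using lift_measurable[OF K] zs by (auto simp: measurable_def)
    moreover have "\<forall>k<K. 0 \<le> lift K z k" using z0 z1 by (auto simp: lift_def Kn less_Suc_eq)
    moreover have "(\<Sum>k<K. lift K z k) = 1"
    proof -
      have "(\<Sum>k<K. lift K z k) = (\<Sum>k<n. lift K z k) + lift K z n" by (simp add: Kn)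
      also have "(\<Sum>k<n. lift K z k) = (\<Sum>k<n. z k)" by (intro sum.cong) (auto simp: lift_def Kn)
      finally show ?thesis by (simp add: lift_def Kn)
    qed
    ultimately show "z \<in> proj_simplex K \<inter> (lift K -` Delta K \<inter> space (LB (K-1)))"
      using z zs by (auto simp: Delta_def)
  qed auto
  then show ?thesis
    using measure_unif[OF K Delta_sets] proj_simplex_finite proj_simplex_pos
    by (simp add: measure_def enn2real_eq_0_iff)
qed

lemma measure_Int_Delta:
  assumes K: "K \<ge> 1" and A: "A \<in> sets (LB K)"
  shows "measure (unif_simplex K) (A \<inter> Delta K) = measure (unif_simplex K) A"
proof -
  interpret prob_space "unif_simplex K" by (rule prob_unif[OF K])
  have "measure (unif_simplex K) (A - Delta K) \<le> measure (unif_simplex K) (space (unif_simplex K) - Delta K)"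
    using A Delta_sets by (intro finite_measure_mono) (auto simp: sets_unif space_unif dest: sets.sets_into_space)
  also have "\<dots> = 0" using Delta_prob[OF K] Delta_sets
    by (subst prob_compl) (auto simp: sets_unif)
  finally have "measure (unif_simplex K) (A - Delta K) = 0" by (simp add: measure_le_0_iff)
  moreover have "measure (unif_simplex K) A = measure (unif_simplex K) (A \<inter> Delta K) + measure (unif_simplex K) (A - Delta K)"
    using A Delta_sets by (intro finite_measure_Diff' [symmetric] | subst finite_measure_Union[symmetric]) (auto simp: sets_unif intro!: arg_cong[where f="measure _"])
  ultimately show ?thesis by simp
qed

lemma top_comp_le_iff:
  fixes x :: "nat \<Rightarrow> real"
  assumes i: "i < K"
  shows "rev (sort (map x [0..<K])) ! i \<le> t \<longleftrightarrow> (\<Sum>j<K. if t < x j then 1 else 0::real) \<le> real i"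
proof -
  have "length (filter (\<lambda>y. t < y) (map x [0..<K])) = card {j\<in>{..<K}. t < x j}"
    unfolding length_filter_conv_card by (intro arg_cong[where f=card]) auto
  also have "real \<dots> = (\<Sum>j<K. if t < x j then 1 else 0::real)"
    by (simp add: sum.inter_filter[symmetric])
  finally have h: "real (length (filter (\<lambda>y. t < y) (map x [0..<K]))) = (\<Sum>j<K. if t < x j then 1 else 0::real)" .
  have "rev (sort (map x [0..<K])) ! i \<le> t \<longleftrightarrow> length (filter (\<lambda>y. t < y) (map x [0..<K])) \<le> i"
    using rev_sort_le_iff[of i "map x [0..<K]" t] i by simp
  also have "\<dots> \<longleftrightarrow> real (length (filter (\<lambda>y. t < y) (map x [0..<K]))) \<le> real i" by (rule of_nat_le_iff[symmetric])
  finally show ?thesis unfolding h .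
qed

lemma top_comp_measurable:
  assumes i: "i < K"
  shows "(\<lambda>x. rev (sort (map x [0..<K])) ! i) \<in> borel_measurable (LB K)"
proof (subst borel_measurable_iff_le, intro allI)
  fix t
  have "{w \<in> space (LB K). rev (sort (map w [0..<K])) ! i \<le> t} =
        {w \<in> space (LB K). (\<Sum>j<K. if t < w j then 1 else 0::real) \<le> real i}"
    using top_comp_le_iff[OF i] by auto
  also have "\<dots> \<in> sets (LB K)" by measurable
  finally show "{w \<in> space (LB K). rev (sort (map w [0..<K])) ! i \<le> t} \<in> sets (LB K)" .
qed

lemma top_stats_measurable:
  assumes rK: "r \<le> K"
  shows "top_stats r K \<in> measurable (LB K) borel"
proof -
  have "(\<lambda>\<omega> i. (\<lambda>i x. if i < r then rev (sort (map x [0..<K])) ! i else 0) i \<omega>)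
        \<in> measurable (LB K) (PiM UNIV (\<lambda>_. borel))"
    apply (rule measurable_PiM_single')
    subgoal for i using top_comp_measurable[of i K] rK by (cases "i < r") auto
    by auto
  then show ?thesis
    unfolding top_stats_def by (simp add: measurable_cong_sets[OF refl sets_PiM_equal_borel])
qed

lemma measure_law_top:
  assumes rK: "r \<le> K" and A: "A \<in> sets borel"
  shows "measure (law_top r K) A = measure (unif_simplex K) (top_stats r K -` A \<inter> space (LB K))"
  unfolding law_top_def using top_stats_measurable[OF rK] A
  by (subst measure_distr) (auto simp: space_unif measurable_cong_sets[OF sets_unif refl])
lemma top_perm:
  obtains p where "p permutes {..<K}" "\<And>i. i < K \<Longrightarrow> rev (sort (map x [0..<K])) ! i = x (p i)"
proof -
  have "mset (rev (sort (map x [0..<K]))) = mset (map x [0..<K])" by simp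
  then obtain p where p: "p permutes {..<length (map x [0..<K])}"
    "permute_list p (map x [0..<K]) = rev (sort (map x [0..<K]))"
    by (rule mset_eq_permutation)
  have "\<And>i. i < K \<Longrightarrow> rev (sort (map x [0..<K])) ! i = x (p i)"
  proof -
    fix i assume i: "i < K"
    have pi: "p i < K" using permutes_in_image[OF p(1)] i by simp
    have "rev (sort (map x [0..<K])) ! i = permute_list p (map x [0..<K]) ! i" using p(2) by simp
    also have "\<dots> = map x [0..<K] ! p i" using p(1) i by (intro permute_list_nth) auto
    finally show "rev (sort (map x [0..<K])) ! i = x (p i)" using pi by simp
  qed
  then show ?thesis using that p(1) by simp
qed

lemma rev_sort_desc:
  fixes xs :: "real list"
  assumes "i \<le> j" "j < length xs"
  shows "rev (sort xs) ! j \<le> rev (sort xs) ! i"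
  using assms by (simp add: rev_nth) (intro sorted_nth_mono, auto)

lemma top_in_nabla:
  assumes r: "r \<ge> 1" and rK: "r \<le> K" and x: "x \<in> Delta K"
  shows "top_stats r K x \<in> nabla r"
proof -
  obtain p where p: "p permutes {..<K}" "\<And>i. i < K \<Longrightarrow> rev (sort (map x [0..<K])) ! i = x (p i)"
    using top_perm by blast
  have x0: "\<And>k. k < K \<Longrightarrow> 0 \<le> x k" and x1: "(\<Sum>k<K. x k) = 1" using x by (auto simp: Delta_def)
  have pK: "\<And>i. i < K \<Longrightarrow> p i < K" using permutes_in_image[OF p(1)] by simp
  have "0 \<le> top_stats r K x (r - 1)"
    using r rK p(2)[of "r-1"] x0[OF pK[of "r-1"]] by (simp add: top_stats_def)
  moreover have "\<forall>i. Suc i < r \<longrightarrow> top_stats r K x (Suc i) \<le> top_stats r K x i"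
    using rK by (auto simp: top_stats_def intro!: rev_sort_desc)
  moreover have "(\<Sum>i<r. top_stats r K x i) \<le> 1"
  proof -
    have "(\<Sum>i<r. top_stats r K x i) = (\<Sum>i<r. x (p i))"
      using rK by (intro sum.cong) (auto simp: top_stats_def p(2))
    also have "\<dots> = (\<Sum>k\<in>p ` {..<r}. x k)"
      using permutes_inj[OF p(1)] by (subst sum.reindex) (auto intro: inj_on_subset)
    also have "\<dots> \<le> (\<Sum>k<K. x k)"
      using pK rK x0 by (intro sum_mono2) auto
    finally show ?thesis using x1 by simp
  qed
  ultimately show ?thesis by (auto simp: nabla_def top_stats_def)
qed

lemma ev_sets:
  fixes r :: nat
  assumes j: "\<And>i. i < r \<Longrightarrow> j i < K"
  shows "{x \<in> space (LB K). \<forall>i<r. b i \<le> x (j i)} \<in> sets (LB K)"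
proof -
  have h: "\<And>i. i \<in> {..<r} \<Longrightarrow> {x \<in> space (LB K). b i \<le> x (j i)} \<in> sets (LB K)"
  proof -
    fix i assume i: "i \<in> {..<r}"
    have "(\<lambda>x. x (j i)) \<in> borel_measurable (LB K)"
      using measurable_component_singleton[of "j i" "{..<K}" "\<lambda>_. lborel"] j i by simp
    then show "{x \<in> space (LB K). b i \<le> x (j i)} \<in> sets (LB K)" by measurable
  qed
  have "{x \<in> space (LB K). \<forall>i\<in>{..<r}. b i \<le> x (j i)} \<in> sets (LB K)"
    by (rule sets.sets_Collect_finite_All[OF h finite_lessThan])
  then show ?thesis by (simp only: Ball_def lessThan_iff)
qed

lemma ev_formula:
  fixes r :: nat
  assumes K: "K \<ge> 1" and j: "\<And>i. i < r \<Longrightarrow> j i < K" and inj: "inj_on j {..<r}"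
    and b0: "\<And>i. i < r \<Longrightarrow> 0 \<le> b i" and bs: "(\<Sum>i<r. b i) < 1"
  shows "measure (unif_simplex K) {x \<in> space (LB K). \<forall>i<r. b i \<le> x (j i)} = (1 - (\<Sum>i<r. b i)) ^ (K - 1)"
proof -
  define a where "a k = (\<Sum>i<r. if j i = k then b i else 0)" for k
  have a0: "\<And>k. k < K \<Longrightarrow> 0 \<le> a k" unfolding a_def using b0 by (intro sum_nonneg) auto
  have asum: "(\<Sum>k<K. a k) = (\<Sum>i<r. b i)"
  proof -
    have "(\<Sum>k<K. a k) = (\<Sum>i<r. \<Sum>k<K. if j i = k then b i else 0)"
      unfolding a_def by (rule sum.swap)
    also have "\<dots> = (\<Sum>i<r. b i)"
      using j by (intro sum.cong refl) (simp add: sum.delta[OF finite_lessThan] eq_commute)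
    finally show ?thesis .
  qed
  have aj: "\<And>i. i < r \<Longrightarrow> a (j i) = b i"
  proof -
    fix i assume i: "i < r"
    have "a (j i) = (\<Sum>i'<r. if i' = i then b i' else 0)"
      unfolding a_def using inj i by (intro sum.cong refl) (auto dest: inj_onD)
    also have "\<dots> = b i" using i by (subst sum.delta) auto
    finally show "a (j i) = b i" .
  qed
  have ak: "\<And>k. (\<forall>i<r. j i \<noteq> k) \<Longrightarrow> a k = 0" unfolding a_def by (intro sum.neutral) auto
  define E1 where "E1 = {x \<in> space (LB K). \<forall>i<r. b i \<le> x (j i)}"
  define E2 where "E2 = {x \<in> space (LB K). \<forall>k<K. a k \<le> x k}"
  have E1: "E1 \<in> sets (LB K)" unfolding E1_def using j by (rule ev_sets)
  have E2: "E2 \<in> sets (LB K)" unfolding E2_def by measurable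
  have "E1 \<inter> Delta K = E2 \<inter> Delta K"
  proof (intro set_eqI iffI)
    fix x assume x: "x \<in> E1 \<inter> Delta K"
    have "\<forall>k<K. a k \<le> x k"
    proof (intro allI impI)
      fix k assume k: "k < K"
      show "a k \<le> x k"
      proof (cases "\<exists>i<r. j i = k")
        case True
        then obtain i where "i < r" "j i = k" by auto
        then show ?thesis using aj x by (auto simp: E1_def)
      next
        case False
        then show ?thesis using ak[of k] x k by (auto simp: Delta_def)
      qed
    qed
    then show "x \<in> E2 \<inter> Delta K" using x by (auto simp: E2_def E1_def)
  next
    fix x assume x: "x \<in> E2 \<inter> Delta K"
    then show "x \<in> E1 \<inter> Delta K" using aj j by (auto simp: E2_def E1_def) (metis aj j)
  qed
  then have "measure (unif_simplex K) E1 = measure (unif_simplex K) E2"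
    using measure_Int_Delta[OF K E1] measure_Int_Delta[OF K E2] by simp
  also have "\<dots> = (1 - (\<Sum>i<r. b i)) ^ (K - 1)"
    unfolding E2_def using key_formula[OF K a0] asum bs by simp
  finally show ?thesis unfolding E1_def .
qed
lemma grid_facts:
  fixes y d :: real
  assumes d: "d > 0" and y: "0 \<le> y"
  shows "y - 2 * d \<le> d * real (nat (\<lfloor>y / d\<rfloor> - 1))"
    and "d * real (nat (\<lfloor>y / d\<rfloor> - 1)) \<le> y"
    and "nat (\<lfloor>y / d\<rfloor> - 1) \<noteq> 0 \<Longrightarrow> d * real (nat (\<lfloor>y / d\<rfloor> - 1)) < y"
    and "y \<le> 1 \<Longrightarrow> nat (\<lfloor>y / d\<rfloor> - 1) \<le> nat \<lfloor>1 / d\<rfloor>"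
proof -
  define f where "f = \<lfloor>y / d\<rfloor>"
  have f1: "real_of_int f \<le> y / d" and f2: "y / d < real_of_int f + 1"
    unfolding f_def by linarith+
  have f1': "d * real_of_int f \<le> y" using f1 d by (simp add: field_simps)
  have f2': "y < d * real_of_int f + d" using f2 d by (simp add: field_simps)
  have m: "real (nat (f - 1)) = (if f \<ge> 1 then real_of_int f - 1 else 0)" by auto
  have f0: "\<not> 1 \<le> f \<Longrightarrow> d * real_of_int f \<le> 0" using d by (simp add: mult_nonneg_nonpos)
  show "y - 2 * d \<le> d * real (nat (\<lfloor>y / d\<rfloor> - 1))"
    unfolding f_def[symmetric] m using f2' d y f0 by (auto simp: algebra_simps)
  show "d * real (nat (\<lfloor>y / d\<rfloor> - 1)) \<le> y"
    unfolding f_def[symmetric] m using f1' d y by (auto simp: algebra_simps)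
  show "d * real (nat (\<lfloor>y / d\<rfloor> - 1)) < y" if "nat (\<lfloor>y / d\<rfloor> - 1) \<noteq> 0"
  proof -
    have "f \<ge> 2" using that unfolding f_def[symmetric] by auto
    then show ?thesis unfolding f_def[symmetric] m using f1' d by (auto simp: algebra_simps)
  qed
  show "nat (\<lfloor>y / d\<rfloor> - 1) \<le> nat \<lfloor>1 / d\<rfloor>" if "y \<le> 1"
  proof -
    have "y / d \<le> 1 / d" using that d by (simp add: divide_right_mono)
    then have "\<lfloor>y / d\<rfloor> \<le> \<lfloor>1 / d\<rfloor>" by (rule floor_mono)
    then show ?thesis by linarith
  qed
qed

lemma upper_prob:
  fixes r K :: nat and F :: "(nat \<Rightarrow> real) set" and c d :: real
  assumes r: "r \<ge> 1" and rK: "r \<le> K" and F: "F \<in> sets borel"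
    and Fc: "\<And>q. q \<in> F \<Longrightarrow> c \<le> (\<Sum>i<r. q i)" and d: "d > 0" and b: "0 < 1 - c + 2 * r * d"
  shows "measure (law_top r K) F \<le> real K ^ r * real (nat \<lfloor>1 / d\<rfloor> + 1) ^ r * (1 - c + 2 * r * d) ^ (K - 1)"
proof -
  have K: "K \<ge> 1" using r rK by simp
  interpret P: prob_space "unif_simplex K" by (rule prob_unif[OF K])
  define N where "N = nat \<lfloor>1 / d\<rfloor>"
  define JM where "JM = ({..<r} \<rightarrow>\<^sub>E {..<K}) \<times> ({..<r} \<rightarrow>\<^sub>E {..N})"
  define T where "T = {(j, m) \<in> JM. inj_on j {..<r} \<and> c - 2 * r * d \<le> (\<Sum>i<r. d * real (m i)) \<and> (\<Sum>i<r. d * real (m i)) < 1}"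
  define Ev where "Ev = (\<lambda>(j, m). {x \<in> space (LB K). \<forall>i<r. d * real (m i) \<le> x (j i)})"
  define B where "B = (1 - c + 2 * r * d) ^ (K - 1)"
  have finJM: "finite JM" unfolding JM_def by (auto intro!: finite_PiE)
  have finT: "finite T" using finJM unfolding T_def by (rule rev_finite_subset) auto
  have Ev_sets: "Ev t \<in> sets (LB K)" if "t \<in> T" for t
  proof -
    obtain j m where t: "t = (j, m)" by (cases t)
    have "\<And>i. i < r \<Longrightarrow> j i < K" using that t by (auto simp: T_def JM_def PiE_def Pi_def)
    then show ?thesis unfolding t Ev_def by (simp add: ev_sets)
  qed
  have Ev_meas: "measure (unif_simplex K) (Ev t) \<le> B" if "t \<in> T" for t
  proof -
    obtain j m where t: "t = (j, m)" by (cases t)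
    have j: "\<And>i. i < r \<Longrightarrow> j i < K" and inj: "inj_on j {..<r}"
      and s1: "c - 2 * r * d \<le> (\<Sum>i<r. d * real (m i))" and s2: "(\<Sum>i<r. d * real (m i)) < 1"
      using that t by (auto simp: T_def JM_def PiE_def Pi_def)
    have "measure (unif_simplex K) (Ev t) = (1 - (\<Sum>i<r. d * real (m i))) ^ (K - 1)"
      unfolding t Ev_def using ev_formula[OF K j inj _ s2] d by simp
    also have "\<dots> \<le> B" unfolding B_def using s1 s2 by (intro power_mono) auto
    finally show ?thesis .
  qed
  define pre where "pre = top_stats r K -` F \<inter> space (LB K)"
  have pre: "pre \<in> sets (LB K)" unfolding pre_def using measurable_sets[OF top_stats_measurable[OF rK] F] .
  have incl: "pre \<inter> Delta K \<subseteq> (\<Union>t\<in>T. Ev t)"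
  proof
    fix x assume x: "x \<in> pre \<inter> Delta K"
    then have xF: "top_stats r K x \<in> F" and xs: "x \<in> space (LB K)" and xD: "x \<in> Delta K"
      by (auto simp: pre_def)
    have x0: "\<And>k. k < K \<Longrightarrow> 0 \<le> x k" and x1: "(\<Sum>k<K. x k) = 1" using xD by (auto simp: Delta_def)
    obtain p where p: "p permutes {..<K}" "\<And>i. i < K \<Longrightarrow> rev (sort (map x [0..<K])) ! i = x (p i)"
      using top_perm by blast
    have pK: "\<And>i. i < K \<Longrightarrow> p i < K" using permutes_in_image[OF p(1)] by simp
    have tp: "\<And>i. i < r \<Longrightarrow> top_stats r K x i = x (p i)" using p(2) rK by (simp add: top_stats_def)
    have y0: "\<And>i. i < r \<Longrightarrow> 0 \<le> x (p i)" using x0 pK rK by simp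
    have y1: "\<And>i. i < r \<Longrightarrow> x (p i) \<le> 1"
    proof -
      fix i assume i: "i < r"
      have "x (p i) \<le> (\<Sum>k<K. x k)" using pK[of i] i rK x0 by (intro member_le_sum) auto
      then show "x (p i) \<le> 1" using x1 by simp
    qed
    have sumle: "(\<Sum>i<r. x (p i)) \<le> 1"
      using top_in_nabla[OF r rK xD] tp by (simp add: nabla_def)
    have sumge: "c \<le> (\<Sum>i<r. x (p i))" using Fc[OF xF] tp by simp
    define j where "j = restrict p {..<r}"
    define m where "m = restrict (\<lambda>i. nat (\<lfloor>x (p i) / d\<rfloor> - 1)) {..<r}"
    have mj: "\<And>i. i < r \<Longrightarrow> m i = nat (\<lfloor>x (p i) / d\<rfloor> - 1) \<and> j i = p i" by (simp add: m_def j_def)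
    have g1: "\<And>i. i < r \<Longrightarrow> x (p i) - 2 * d \<le> d * real (m i)"
      using grid_facts(1)[OF d y0] mj by simp
    have g2: "\<And>i. i < r \<Longrightarrow> d * real (m i) \<le> x (p i)"
      using grid_facts(2)[OF d y0] mj by simp
    have g3: "\<And>i. i < r \<Longrightarrow> m i \<noteq> 0 \<Longrightarrow> d * real (m i) < x (p i)"
      using grid_facts(3)[OF d y0] mj by simp
    have g4: "\<And>i. i < r \<Longrightarrow> m i \<le> N"
      using grid_facts(4)[OF d y0 y1] mj by (simp add: N_def)
    have "(j, m) \<in> JM" unfolding JM_def using pK rK g4 by (auto simp: j_def m_def PiE_def Pi_def)
    moreover have "inj_on j {..<r}"
      using permutes_inj[OF p(1)] unfolding j_def by (auto simp: inj_on_def)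
    moreover have "c - 2 * r * d \<le> (\<Sum>i<r. d * real (m i))"
    proof -
      have "(\<Sum>i<r. x (p i) - 2 * d) \<le> (\<Sum>i<r. d * real (m i))" using g1 by (intro sum_mono) auto
      then show ?thesis using sumge by (simp add: sum_subtractf)
    qed
    moreover have "(\<Sum>i<r. d * real (m i)) < 1"
    proof (cases "\<forall>i<r. m i = 0")
      case True
      then show ?thesis by simp
    next
      case False
      then obtain i0 where "i0 < r" "m i0 \<noteq> 0" by auto
      then have "(\<Sum>i<r. d * real (m i)) < (\<Sum>i<r. x (p i))"
        using g2 g3 by (intro sum_strict_mono_ex1) auto
      then show ?thesis using sumle by simp
    qed
    moreover have "x \<in> Ev (j, m)" unfolding Ev_def using xs g2 mj by auto
    ultimately show "x \<in> (\<Union>t\<in>T. Ev t)" unfolding T_def by blast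
  qed
  have "measure (law_top r K) F = measure (unif_simplex K) pre"
    unfolding pre_def using measure_law_top[OF rK F] .
  also have "\<dots> = measure (unif_simplex K) (pre \<inter> Delta K)" using measure_Int_Delta[OF K pre] by simp
  also have "\<dots> \<le> measure (unif_simplex K) (\<Union>t\<in>T. Ev t)"
    using incl Ev_sets finT by (intro P.finite_measure_mono) (auto simp: sets_unif)
  also have "\<dots> \<le> (\<Sum>t\<in>T. measure (unif_simplex K) (Ev t))"
    using Ev_sets finT by (intro P.finite_measure_subadditive_finite) (auto simp: sets_unif)
  also have "\<dots> \<le> (\<Sum>t\<in>T. B)" using Ev_meas by (intro sum_mono) auto
  also have "\<dots> = real (card T) * B" by simp
  also have "\<dots> \<le> real (card JM) * B"
  proof -
    have "card T \<le> card JM" using finJM unfolding T_def by (intro card_mono) auto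
    moreover have "B \<ge> 0" unfolding B_def using b by simp
    ultimately show ?thesis by (intro mult_right_mono) auto
  qed
  also have "real (card JM) = real K ^ r * real (N + 1) ^ r"
    unfolding JM_def by (simp add: card_cartesian_product card_PiE)
  finally show ?thesis unfolding B_def N_def .
qed
lemma nabla_mono:
  assumes q: "q \<in> nabla r" and ab: "a \<le> b" and br: "b < r"
  shows "q b \<le> q a"
  using ab br
proof (induction b rule: dec_induct)
  case base
  then show ?case by simp
next
  case (step n)
  then have "q (Suc n) \<le> q n" using q by (auto simp: nabla_def)
  then show ?case using step by simp
qed

lemma nabla_nonneg:
  assumes q: "q \<in> nabla r" and a: "a < r"
  shows "0 \<le> q a"
proof -
  have "q (r - 1) \<le> q a" using nabla_mono[OF q, of a "r-1"] a by simp
  moreover have "0 \<le> q (r - 1)" using q by (simp add: nabla_def)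
  ultimately show ?thesis by simp
qed

lemma sort_v:
  assumes q: "q \<in> nabla r" and rK: "r \<le> K" and i: "i < r"
  shows "rev (sort (map (\<lambda>k. if k < r then q k else 0) [0..<K])) ! i = q i"
proof -
  define v where "v = (\<lambda>k. if k < r then q k else 0)"
  define vs where "vs = map v [0..<K]"
  have vmono: "v b \<le> v a" if "a \<le> b" "b < K" for a b
  proof (cases "b < r")
    case True
    then show ?thesis using nabla_mono[OF q that(1)] that by (simp add: v_def)
  next
    case False
    then show ?thesis using nabla_nonneg[OF q, of a] by (simp add: v_def)
  qed
  have "sorted (rev vs)"
    unfolding sorted_iff_nth_mono
  proof (intro allI impI)
    fix a b assume ab: "a \<le> b" "b < length (rev vs)"
    then show "rev vs ! a \<le> rev vs ! b"
      by (simp add: rev_nth vs_def vmono)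
  qed
  then have "sort vs = rev vs" by (intro properties_for_sort) simp
  then have "rev (sort vs) = vs" by simp
  then show ?thesis using i rK by (simp add: vs_def v_def[symmetric]) (simp add: v_def)
qed

lemma sum_bump:
  fixes q :: "nat \<Rightarrow> real"
  assumes i: "i < r"
  shows "(\<Sum>i'<r. q i' + (if i' = i then d else 0)) = (\<Sum>i'<r. q i') + d"
  using i by (simp add: sum.distrib)

lemma lower_prob:
  fixes r K :: nat and G :: "(nat \<Rightarrow> real) set" and q :: "nat \<Rightarrow> real" and e d :: real
  assumes r: "r \<ge> 1" and rK: "r \<le> K" and G: "G \<in> sets borel" and q: "q \<in> nabla r"
    and s: "(\<Sum>i<r. q i) < 1"
    and nb: "\<And>y. y \<in> nabla r \<Longrightarrow> (\<forall>i<r. \<bar>y i - q i\<bar> < e) \<Longrightarrow> y \<in> G"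
    and d: "0 < d" "d < e" "d < 1 - (\<Sum>i<r. q i)"
  shows "(1 - (\<Sum>i<r. q i)) ^ (K - 1) - real K * (1 - (\<Sum>i<r. q i) - d) ^ (K - 1) \<le> measure (law_top r K) G"
proof -
  have K: "K \<ge> 1" using r rK by simp
  interpret P: prob_space "unif_simplex K" by (rule prob_unif[OF K])
  define s where "s = (\<Sum>i<r. q i)"
  have q0: "\<And>i. i < r \<Longrightarrow> 0 \<le> q i" using nabla_nonneg[OF q] by simp
  define A where "A = {x \<in> space (LB K). \<forall>i<r. q i \<le> x i}"
  define bB where "bB i = (\<lambda>i'. q i' + (if i' = i then d else 0))" for i
  define B where "B i = {x \<in> space (LB K). \<forall>i'<r. bB i i' \<le> x i'}" for i
  define jC where "jC k = (\<lambda>i'. if i' = r then k else i')" for k :: nat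
  define bC where "bC = (\<lambda>i'. if i' = r then d else q i')"
  define C where "C k = {x \<in> space (LB K). \<forall>i'<Suc r. bC i' \<le> x (jC k i')}" for k
  define U where "U = (\<Union>i\<in>{..<r}. B i)"
  define V where "V = (\<Union>k\<in>{r..<K}. C k)"
  define E where "E = A - U - V"
  have A_sets: "A \<in> sets (LB K)" unfolding A_def using ev_sets[of r id K q] rK by simp
  have B_sets: "B i \<in> sets (LB K)" for i unfolding B_def using ev_sets[of r id K "bB i"] rK by simp
  have C_sets: "k \<in> {r..<K} \<Longrightarrow> C k \<in> sets (LB K)" for k
    unfolding C_def using ev_sets[of "Suc r" "jC k" K bC] rK by (simp add: jC_def)
  have U_sets: "U \<in> sets (LB K)" unfolding U_def using B_sets by auto
  have V_sets: "V \<in> sets (LB K)" unfolding V_def using C_sets by auto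
  have E_sets: "E \<in> sets (LB K)" unfolding E_def using A_sets U_sets V_sets by auto
  have PA: "measure (unif_simplex K) A = (1 - s) ^ (K - 1)"
    unfolding A_def s_def using ev_formula[OF K, of r id q] rK q0 s by simp
  have PB: "measure (unif_simplex K) (B i) = (1 - s - d) ^ (K - 1)" if "i < r" for i
  proof -
    have "measure (unif_simplex K) (B i) = (1 - (\<Sum>i'<r. bB i i')) ^ (K - 1)"
      unfolding B_def using ev_formula[OF K, of r id "bB i"] rK q0 d sum_bump[OF that, of q d] s
      by (simp add: bB_def)
    then show ?thesis using sum_bump[OF that, of q d] by (simp add: bB_def s_def diff_diff_eq)
  qed
  have sC: "(\<Sum>i'<Suc r. bC i') = s + d"
  proof -
    have "(\<Sum>i'<Suc r. bC i') = (\<Sum>i'<r. bC i') + bC r" by simp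
    also have "(\<Sum>i'<r. bC i') = s" unfolding s_def bC_def by (intro sum.cong) auto
    finally show ?thesis by (simp add: bC_def)
  qed
  have PC: "measure (unif_simplex K) (C k) = (1 - s - d) ^ (K - 1)" if k: "k \<in> {r..<K}" for k
  proof -
    have j: "\<And>i. i < Suc r \<Longrightarrow> jC k i < K" using k rK by (auto simp: jC_def)
    have inj: "inj_on (jC k) {..<Suc r}" using k by (auto simp: jC_def inj_on_def)
    have b0: "\<And>i. i < Suc r \<Longrightarrow> 0 \<le> bC i" using q0 d by (auto simp: bC_def)
    have "measure (unif_simplex K) (C k) = (1 - (\<Sum>i'<Suc r. bC i')) ^ (K - 1)"
      unfolding C_def using ev_formula[OF K j inj b0] sC d by (simp add: s_def)
    then show ?thesis using sC by (simp add: diff_diff_eq)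
  qed
  have PU: "measure (unif_simplex K) U \<le> real r * (1 - s - d) ^ (K - 1)"
  proof -
    have "measure (unif_simplex K) U \<le> (\<Sum>i<r. measure (unif_simplex K) (B i))"
      unfolding U_def using B_sets by (intro P.finite_measure_subadditive_finite) (auto simp: sets_unif)
    also have "\<dots> = real r * (1 - s - d) ^ (K - 1)" using PB by simp
    finally show ?thesis .
  qed
  have PV: "measure (unif_simplex K) V \<le> real (K - r) * (1 - s - d) ^ (K - 1)"
  proof -
    have "measure (unif_simplex K) V \<le> (\<Sum>k\<in>{r..<K}. measure (unif_simplex K) (C k))"
      unfolding V_def using C_sets by (intro P.finite_measure_subadditive_finite) (auto simp: sets_unif)
    also have "\<dots> = real (K - r) * (1 - s - d) ^ (K - 1)" using PC by simp
    finally show ?thesis .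
  qed
  have PE: "measure (unif_simplex K) A \<le> measure (unif_simplex K) E + measure (unif_simplex K) U + measure (unif_simplex K) V"
  proof -
    have "measure (unif_simplex K) A \<le> measure (unif_simplex K) (E \<union> U \<union> V)"
      using A_sets E_sets U_sets V_sets by (intro P.finite_measure_mono) (auto simp: E_def sets_unif)
    also have "\<dots> \<le> measure (unif_simplex K) (E \<union> U) + measure (unif_simplex K) V"
      using E_sets U_sets V_sets by (intro measure_subadditive) (auto simp: sets_unif P.emeasure_finite)
    also have "measure (unif_simplex K) (E \<union> U) \<le> measure (unif_simplex K) E + measure (unif_simplex K) U"
      using E_sets U_sets by (intro measure_subadditive) (auto simp: sets_unif P.emeasure_finite)
    finally show ?thesis by simp
  qed
  define pre where "pre = top_stats r K -` G \<inter> space (LB K)"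
  have pre: "pre \<in> sets (LB K)" unfolding pre_def using measurable_sets[OF top_stats_measurable[OF rK] G] .
  have incl: "E \<inter> Delta K \<subseteq> pre \<inter> Delta K"
  proof
    fix x assume x: "x \<in> E \<inter> Delta K"
    then have xs: "x \<in> space (LB K)" and xD: "x \<in> Delta K" and xA: "x \<in> A" and xU: "x \<notin> U" and xV: "x \<notin> V"
      by (auto simp: E_def A_def)
    have x0: "\<And>k. k < K \<Longrightarrow> 0 \<le> x k" using xD by (auto simp: Delta_def)
    have lo: "\<And>i. i < r \<Longrightarrow> q i \<le> x i" using xA by (auto simp: A_def)
    have hi: "\<And>i. i < r \<Longrightarrow> x i < q i + d"
    proof (rule ccontr)
      fix i assume i: "i < r" and "\<not> x i < q i + d"
      then have "x \<in> B i" using lo xs by (auto simp: B_def bB_def)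
      then show False using xU i by (auto simp: U_def)
    qed
    have hiV: "\<And>k. r \<le> k \<Longrightarrow> k < K \<Longrightarrow> x k < d"
    proof (rule ccontr)
      fix k assume k: "r \<le> k" "k < K" and "\<not> x k < d"
      then have "x \<in> C k" using lo xs by (auto simp: C_def bC_def jC_def less_Suc_eq)
      then show False using xV k by (auto simp: V_def)
    qed
    define v where "v = (\<lambda>k. if k < r then q k else 0)"
    have close: "\<And>k. k < K \<Longrightarrow> \<bar>x k - v k\<bar> \<le> d"
    proof -
      fix k assume k: "k < K"
      show "\<bar>x k - v k\<bar> \<le> d"
      proof (cases "k < r")
        case True
        then show ?thesis using lo[OF True] hi[OF True] by (simp add: v_def)
      next
        case False
        then show ?thesis using x0[OF k] hiV[of k] k by (simp add: v_def)
      qed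
    qed
    have tn: "top_stats r K x \<in> nabla r" by (rule top_in_nabla[OF r rK xD])
    have "\<forall>i<r. \<bar>top_stats r K x i - q i\<bar> < e"
    proof (intro allI impI)
      fix i assume i: "i < r"
      have iK: "i < K" using i rK by simp
      have c1: "\<And>k. k < length (map v [0..<K]) \<Longrightarrow> \<bar>map x [0..<K] ! k - map v [0..<K] ! k\<bar> \<le> d"
        using close by simp
      have c2: "\<And>k. k < length (map x [0..<K]) \<Longrightarrow> \<bar>map v [0..<K] ! k - map x [0..<K] ! k\<bar> \<le> d"
        using close by (simp add: abs_minus_commute)
      have l1: "rev (sort (map x [0..<K])) ! i \<le> rev (sort (map v [0..<K])) ! i + d"
        by (rule rev_sort_lipschitz) (use c1 iK in auto)
      have l2: "rev (sort (map v [0..<K])) ! i \<le> rev (sort (map x [0..<K])) ! i + d"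
        by (rule rev_sort_lipschitz) (use c2 iK in auto)
      have sv: "rev (sort (map v [0..<K])) ! i = q i" unfolding v_def using sort_v[OF q rK i] .
      have "top_stats r K x i = rev (sort (map x [0..<K])) ! i" using i by (simp add: top_stats_def)
      then show "\<bar>top_stats r K x i - q i\<bar> < e" using l1 l2 sv d by auto
    qed
    then have "top_stats r K x \<in> G" using nb[OF tn] by simp
    then show "x \<in> pre \<inter> Delta K" using xs xD by (simp add: pre_def)
  qed
  have "measure (unif_simplex K) E = measure (unif_simplex K) (E \<inter> Delta K)"
    using measure_Int_Delta[OF K E_sets] by simp
  also have "\<dots> \<le> measure (unif_simplex K) (pre \<inter> Delta K)"
    using incl pre Delta_sets by (intro P.finite_measure_mono) (auto simp: sets_unif)
  also have "\<dots> = measure (unif_simplex K) pre" using measure_Int_Delta[OF K pre] by simp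
  also have "\<dots> = measure (law_top r K) G" unfolding pre_def using measure_law_top[OF rK G] by simp
  finally have PEG: "measure (unif_simplex K) E \<le> measure (law_top r K) G" .
  have "(1 - s) ^ (K - 1) - real K * (1 - s - d) ^ (K - 1)
      = (1 - s) ^ (K - 1) - real r * (1 - s - d) ^ (K - 1) - real (K - r) * (1 - s - d) ^ (K - 1)"
    using rK by (simp add: algebra_simps of_nat_diff)
  also have "\<dots> \<le> measure (unif_simplex K) E" using PA PE PU PV by linarith
  finally show ?thesis using PEG unfolding s_def by linarith
qed
lemma lim_aux1: "(\<lambda>n::nat. c / real n) \<longlonglongrightarrow> 0"
  by real_asymp

lemma lim_aux2: "(\<lambda>n::nat. ln (real n) / real n) \<longlonglongrightarrow> 0"
  by real_asymp

lemma lim_aux3: "(\<lambda>n::nat. (real n - 1) / real n) \<longlonglongrightarrow> 1"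
  by real_asymp

lemma lim_g:
  "(\<lambda>n::nat. c / real n + a * (ln (real n) / real n) + l * ((real n - 1) / real n)) \<longlonglongrightarrow> l"
proof -
  have "(\<lambda>n::nat. c / real n + a * (ln (real n) / real n) + l * ((real n - 1) / real n)) \<longlonglongrightarrow> 0 + a * 0 + l * 1"
    by (intro tendsto_intros lim_aux1 lim_aux2 lim_aux3)
  then show ?thesis by simp
qed

lemma asym_upper:
  fixes P :: "nat \<Rightarrow> real" and C b :: real and r :: nat
  assumes C: "C > 0" and b: "b > 0"
    and ev: "eventually (\<lambda>K. 0 \<le> P K \<and> P K \<le> C * real K ^ r * b ^ (K - 1)) sequentially"
  shows "limsup (\<lambda>K. ereal (1 / real K) * elog (P K)) \<le> ereal (ln b)"
proof -
  define g where "g n = ln C / real n + real r * (ln (real n) / real n) + ln b * ((real n - 1) / real n)" for n :: nat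
  have ev2: "eventually (\<lambda>K. ereal (1 / real K) * elog (P K) \<le> ereal (g K)) sequentially"
    using ev eventually_ge_at_top[of 1]
  proof eventually_elim
    case (elim K)
    then have K: "K \<ge> 1" and P0: "0 \<le> P K" and PK: "P K \<le> C * real K ^ r * b ^ (K - 1)" by auto
    show ?case
    proof (cases "P K > 0")
      case False
      then show ?thesis using K by (simp add: elog_def)
    next
      case True
      have "ln (P K) \<le> ln (C * real K ^ r * b ^ (K - 1))"
        using True PK by (subst ln_le_cancel_iff) auto
      also have "\<dots> = ln C + real r * ln (real K) + real (K - 1) * ln b"
        using C b K by (simp add: ln_mult ln_realpow)
      finally have h: "ln (P K) \<le> ln C + real r * ln (real K) + real (K - 1) * ln b" .
      have "ln (P K) / real K \<le> (ln C + real r * ln (real K) + real (K - 1) * ln b) / real K"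
        using h K by (intro divide_right_mono) auto
      also have "\<dots> = g K" using K by (simp add: g_def add_divide_distrib of_nat_diff)
      finally show ?thesis using True by (simp add: elog_def)
    qed
  qed
  have "limsup (\<lambda>K. ereal (1 / real K) * elog (P K)) \<le> limsup (\<lambda>K. ereal (g K))"
    by (rule Limsup_mono[OF ev2])
  also have "\<dots> = ereal (ln b)"
    unfolding g_def by (intro lim_imp_Limsup tendsto_ereal lim_g) simp
  finally show ?thesis .
qed

lemma asym_lower:
  fixes P :: "nat \<Rightarrow> real" and b :: real
  assumes b: "b > 0"
    and ev: "eventually (\<lambda>K. b ^ (K - 1) / 2 \<le> P K) sequentially"
  shows "ereal (ln b) \<le> liminf (\<lambda>K. ereal (1 / real K) * elog (P K))"
proof -
  define g where "g n = (- ln 2) / real n + 0 * (ln (real n) / real n) + ln b * ((real n - 1) / real n)" for n :: nat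
  have ev2: "eventually (\<lambda>K. ereal (g K) \<le> ereal (1 / real K) * elog (P K)) sequentially"
    using ev eventually_ge_at_top[of 1]
  proof eventually_elim
    case (elim K)
    then have K: "K \<ge> 1" and PK: "b ^ (K - 1) / 2 \<le> P K" by auto
    have pos: "0 < b ^ (K - 1) / 2" using b by simp
    then have Ppos: "P K > 0" using PK by linarith
    have "ln (b ^ (K - 1) / 2) \<le> ln (P K)" using pos PK by (subst ln_le_cancel_iff) auto
    moreover have "ln (b ^ (K - 1) / 2) = real (K - 1) * ln b - ln 2"
      using b by (simp add: ln_div ln_realpow)
    ultimately have h: "real (K - 1) * ln b - ln 2 \<le> ln (P K)" by simp
    have "g K = (real (K - 1) * ln b - ln 2) / real K"
      using K by (simp add: g_def field_simps of_nat_diff)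
    also have "\<dots> \<le> ln (P K) / real K" using h K by (intro divide_right_mono) auto
    finally show ?case using Ppos by (simp add: elog_def)
  qed
  have "ereal (ln b) = liminf (\<lambda>K. ereal (g K))"
    unfolding g_def by (intro lim_imp_Liminf[symmetric] tendsto_ereal lim_g) simp
  also have "\<dots> \<le> liminf (\<lambda>K. ereal (1 / real K) * elog (P K))"
    by (rule Liminf_mono[OF ev2])
  finally show ?thesis .
qed

lemma ev_small:
  fixes rho :: real
  assumes "0 < rho" "rho < 1"
  shows "eventually (\<lambda>K. real K * rho ^ (K - 1) \<le> 1 / 2) sequentially"
proof -
  have "(\<lambda>n. of_nat n * rho ^ n) \<longlonglongrightarrow> 0" using assms by (intro powser_times_n_limit_0) simp
  then have "(\<lambda>n. (1 / rho) * (real n * rho ^ n)) \<longlonglongrightarrow> (1 / rho) * 0" by (intro tendsto_intros)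
  then have "eventually (\<lambda>n. (1 / rho) * (real n * rho ^ n) < 1 / 2) sequentially"
    by (intro order_tendstoD) auto
  then show ?thesis using eventually_ge_at_top[of 1]
  proof eventually_elim
    case (elim K)
    then have "rho ^ K = rho * rho ^ (K - 1)" by (cases K) auto
    then show ?case using elim assms by (simp add: field_simps)
  qed
qed
lemma nabla_closed: "closed (nabla r)"
proof -
  have e: "nabla r = (\<Inter>i\<in>{i. r \<le> i}. {q. q i = 0}) \<inter> {q. 0 \<le> q (r - 1)} \<inter>
      (\<Inter>i\<in>{i. Suc i < r}. {q. q (Suc i) \<le> q i}) \<inter> {q. (\<Sum>i<r. q i) \<le> 1}"
    by (auto simp: nabla_def)
  have c: "continuous_on UNIV (\<lambda>q::nat\<Rightarrow>real. q i)" for i by simp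
  have cs: "continuous_on UNIV (\<lambda>q::nat\<Rightarrow>real. \<Sum>i<r. q i)"
    by (intro continuous_on_sum) (simp add: c)
  show ?thesis unfolding e
    by (intro closed_Int closed_INT ballI closed_Collect_eq closed_Collect_le c cs continuous_on_const)
qed

lemma nabla_nbhd:
  fixes q :: "nat \<Rightarrow> real"
  assumes G: "openin (top_of_set (nabla r)) G" and qG: "q \<in> G"
  shows "\<exists>e>0. \<forall>y\<in>nabla r. (\<forall>i<r. \<bar>y i - q i\<bar> < e) \<longrightarrow> y \<in> G"
proof -
  obtain U where U: "open U" "G = nabla r \<inter> U" using G by (auto simp: openin_open)
  have qU: "q \<in> U" and qn: "q \<in> nabla r" using qG U by auto
  obtain e where e: "e > 0" "\<And>y. dist y q < e \<Longrightarrow> y \<in> U"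
    using U(1) qU by (auto simp: open_dist)
  obtain N where N: "(1/2::real) ^ N < e / 2" using real_arch_pow_inv[of "e/2" "1/2"] e by auto
  have "\<forall>y\<in>nabla r. (\<forall>i<r. \<bar>y i - q i\<bar> < e / 4) \<longrightarrow> y \<in> G"
  proof (intro ballI impI)
    fix y assume yn: "y \<in> nabla r" and yc: "\<forall>i<r. \<bar>y i - q i\<bar> < e / 4"
    have all: "dist (y k) (q k) < e / 4" for k
    proof (cases "k < r")
      case True
      then show ?thesis using yc by (simp add: dist_real_def)
    next
      case False
      then show ?thesis using yn qn e by (simp add: nabla_def dist_real_def)
    qed
    define S where "S = {dist (y (from_nat n)) (q (from_nat n)) |n. n \<le> N}"
    have Sfin: "finite S" unfolding S_def by simp
    have Sne: "S \<noteq> {}" unfolding S_def by auto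
    have "Max S \<in> S" using Sfin Sne by (rule Max_in)
    then have MS: "Max S < e / 4" using all unfolding S_def by auto
    have "dist y q \<le> 2 * Max S + (1/2) ^ N" unfolding S_def by (rule dist_fun_le_dist_first_terms)
    also have "\<dots> < e" using MS N by simp
    finally have "y \<in> U" by (rule e(2))
    then show "y \<in> G" using yn U by auto
  qed
  then show ?thesis using e by (intro exI[of _ "e/4"]) auto
qed

lemma rate_eq: "rate r q = (if (\<Sum>k<r. q k) < 1 then ereal (- ln (1 - (\<Sum>k<r. q k))) else \<infinity>)"
proof (cases "(\<Sum>k<r. q k) < 1")
  case True
  then show ?thesis by (simp add: rate_def ln_div)
qed (simp add: rate_def)

theorem theorem2p6:
  fixes r :: nat
  assumes "r \<ge> 1"
  shows "LDP (nabla r) (law_top r) (\<lambda>K. real K) (rate r)"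
  unfolding LDP_def
proof (intro conjI allI impI)
  have r: "r \<ge> 1" by fact
  fix F assume F: "closedin (top_of_set (nabla r)) F"
  have Fsets: "F \<in> sets borel" using closedin_closed_trans[OF F nabla_closed] by simp
  define L where "L = limsup (\<lambda>n. ereal (1 / real n) * elog (measure (law_top r n) F))"
  show "limsup (\<lambda>n. ereal (1 / real n) * elog (measure (law_top r n) F)) \<le> - (INF x\<in>F. rate r x)"
    unfolding L_def[symmetric]
  proof (rule ccontr)
    assume "\<not> L \<le> - (INF x\<in>F. rate r x)"
    then have "- (INF x\<in>F. rate r x) < L" by simp
    then obtain y where y1: "- (INF x\<in>F. rate r x) < ereal y" and y2: "ereal y < L"
      using ereal_dense2 by blast
    then obtain y' where y3: "ereal y < ereal y'" and y4: "ereal y' < L"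
      using ereal_dense2 by blast
    have yy: "y < y'" using y3 by simp
    define c where "c = 1 - exp y"
    have Fc: "c \<le> (\<Sum>i<r. q i)" if q: "q \<in> F" for q
    proof (cases "(\<Sum>i<r. q i) < 1")
      case True
      have "(INF x\<in>F. rate r x) \<le> rate r q" using q by (rule INF_lower)
      then have h: "- rate r q \<le> - (INF x\<in>F. rate r x)" by simp
      have "- rate r q < ereal y" using h y1 by (rule le_less_trans)
      then have "ln (1 - (\<Sum>i<r. q i)) < y" using True by (simp add: rate_eq)
      then have "1 - (\<Sum>i<r. q i) < exp y" using True by (metis exp_less_cancel_iff exp_ln diff_gt_0_iff_gt)
      then show ?thesis unfolding c_def by simp
    next
      case False
      then show ?thesis unfolding c_def using exp_gt_zero[of y] by linarith
    qed
    define d where "d = (exp y' - exp y) / (2 * real r)"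
    have d: "d > 0" unfolding d_def using yy r by simp
    have bdef: "1 - c + 2 * real r * d = exp y'" unfolding c_def d_def using r by simp
    have bdef2: "1 - c + real (2 * r) * d = exp y'" using bdef by simp
    define C where "C = real (nat \<lfloor>1 / d\<rfloor> + 1) ^ r"
    have C: "C > 0" unfolding C_def by simp
    have ev: "eventually (\<lambda>K. 0 \<le> measure (law_top r K) F \<and>
        measure (law_top r K) F \<le> C * real K ^ r * (exp y') ^ (K - 1)) sequentially"
      using eventually_ge_at_top[of r]
    proof eventually_elim
      case (elim K)
      have "measure (law_top r K) F \<le> real K ^ r * real (nat \<lfloor>1 / d\<rfloor> + 1) ^ r * (1 - c + 2 * r * d) ^ (K - 1)"
        by (rule upper_prob[OF r elim Fsets Fc d]) (auto simp: bdef)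
      then have "measure (law_top r K) F \<le> real K ^ r * real (nat \<lfloor>1 / d\<rfloor> + 1) ^ r * (exp y') ^ (K - 1)"
        using bdef by (simp only: bdef2)
      then show ?case unfolding C_def by (simp add: mult_ac)
    qed
    have "L \<le> ereal (ln (exp y'))" unfolding L_def by (rule asym_upper[OF C _ ev]) simp
    then have "L \<le> ereal y'" by simp
    then show False using y4 by simp
  qed
next
  have r: "r \<ge> 1" by fact
  fix G assume G: "openin (top_of_set (nabla r)) G"
  obtain U where U: "open U" "G = nabla r \<inter> U" using G by (auto simp: openin_open)
  have Gsets: "G \<in> sets borel" using U nabla_closed by auto
  define L where "L = liminf (\<lambda>n. ereal (1 / real n) * elog (measure (law_top r n) G))"
  have "- L \<le> (INF x\<in>G. rate r x)"
  proof (rule INF_greatest)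
    fix q assume qG: "q \<in> G"
    show "- L \<le> rate r q"
    proof (cases "(\<Sum>i<r. q i) < 1")
      case False
      then show ?thesis by (simp add: rate_def)
    next
      case True
      define s where "s = (\<Sum>i<r. q i)"
      have s: "s < 1" using True by (simp add: s_def)
      have qn: "q \<in> nabla r" using qG U by auto
      obtain e where e: "e > 0" "\<forall>y\<in>nabla r. (\<forall>i<r. \<bar>y i - q i\<bar> < e) \<longrightarrow> y \<in> G"
        using nabla_nbhd[OF G qG] by auto
      define d where "d = min (e / 2) ((1 - s) / 2)"
      have d: "0 < d" "d < e" "d < 1 - s" unfolding d_def using e s by (auto simp: min_def)
      define b where "b = 1 - s"
      have b: "b > 0" using s by (simp add: b_def)
      define rho where "rho = (b - d) / b"
      have rho: "0 < rho" "rho < 1" unfolding rho_def using b d by (auto simp: b_def field_simps)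
      have ev: "eventually (\<lambda>K. b ^ (K - 1) / 2 \<le> measure (law_top r K) G) sequentially"
        using eventually_ge_at_top[of r] ev_small[OF rho]
      proof eventually_elim
        case (elim K)
        have lp: "b ^ (K - 1) - real K * (b - d) ^ (K - 1) \<le> measure (law_top r K) G"
          using lower_prob[OF r elim(1) Gsets qn True _ d[unfolded s_def]] e(2) by (simp add: b_def s_def)
        have "(b - d) ^ (K - 1) = rho ^ (K - 1) * b ^ (K - 1)"
          unfolding rho_def using b by (simp add: power_divide)
        then have "real K * (b - d) ^ (K - 1) = (real K * rho ^ (K - 1)) * b ^ (K - 1)" by simp
        also have "\<dots> \<le> (1 / 2) * b ^ (K - 1)" using elim(2) b by (intro mult_right_mono) auto
        finally show ?case using lp by simp
      qed
      have "ereal (ln b) \<le> L" unfolding L_def by (rule asym_lower[OF b ev])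
      then have "- L \<le> - ereal (ln b)" by (simp only: ereal_minus_le_minus)
      also have "- ereal (ln b) = rate r q" using True by (simp add: rate_eq b_def s_def)
      finally show ?thesis .
    qed
  qed
  then show "- (INF x\<in>G. rate r x) \<le> liminf (\<lambda>n. ereal (1 / real n) * elog (measure (law_top r n) G))"
    unfolding L_def[symmetric] by (simp add: ereal_uminus_le_reorder)
qed

end
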